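(* For every Boolean function $f:\{0,1\}^n\to\{0,1\}$, we have $\deg(f)\le \lambda(f)^2$.
   Context: $\deg(f)$ is the degree of the unique multilinear real polynomial $q\in\mathbb{R}[x_1,\dots,x_n]$ with $q(x)=f(x)$ for all $x\in\{0,1\}^n$. For $f$ with domain $\mathrm{Dom}(f)\subseteq\{0,1\}^n$, the sensitivity graph $G_f$ has vertex set $\mathrm{Dom}(f)$ and an edge between $x$ and $y$ iff $x,y$ differ in exactly one coordinate and $f(x)\ne f(y)$. Let $A_f$ be its adjacency matrix; the spectral sensitivity is $\lambda(f)=\|A_f\|$ (spectral norm). *)

theory Defs
  imports Complex_Main
begin

text \<open>Points of the Boolean cube {0,1}^n are encoded as functions nat \<Rightarrow> bool
  that are False outside {..<n}; coordinate x_i is of_bool (x i).\<close>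

definition cube :: "nat \<Rightarrow> (nat \<Rightarrow> bool) set" where
  "cube n = {x. \<forall>i\<ge>n. \<not> x i}"

definition mlpoly_eval :: "nat \<Rightarrow> (nat set \<Rightarrow> real) \<Rightarrow> (nat \<Rightarrow> bool) \<Rightarrow> real" where
  "mlpoly_eval n c x = (\<Sum>S\<in>Pow {..<n}. c S * (\<Prod>i\<in>S. of_bool (x i)))"

definition ml_coeffs :: "nat \<Rightarrow> ((nat \<Rightarrow> bool) \<Rightarrow> bool) \<Rightarrow> (nat set \<Rightarrow> real)" where
  "ml_coeffs n f = (THE c. (\<forall>S. \<not> S \<subseteq> {..<n} \<longrightarrow> c S = 0) \<and>
                          (\<forall>x\<in>cube n. mlpoly_eval n c x = of_bool (f x)))"

definition bdeg :: "nat \<Rightarrow> ((nat \<Rightarrow> bool) \<Rightarrow> bool) \<Rightarrow> nat" where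
  "bdeg n f = Max ({0} \<union> {card S | S. S \<subseteq> {..<n} \<and> ml_coeffs n f S \<noteq> 0})"

definition sens_adj :: "nat \<Rightarrow> ((nat \<Rightarrow> bool) \<Rightarrow> bool) \<Rightarrow> (nat \<Rightarrow> bool) \<Rightarrow> (nat \<Rightarrow> bool) \<Rightarrow> real" where
  "sens_adj n f x y = of_bool (x \<in> cube n \<and> y \<in> cube n \<and>
        card {i. x i \<noteq> y i} = 1 \<and> f x \<noteq> f y)"

definition spec_sens :: "nat \<Rightarrow> ((nat \<Rightarrow> bool) \<Rightarrow> bool) \<Rightarrow> real" where
  "spec_sens n f = Sup {sqrt (\<Sum>x\<in>cube n. (\<Sum>y\<in>cube n. sens_adj n f x y * v y)\<^sup>2) | v.
                         (\<Sum>y\<in>cube n. (v y)\<^sup>2) = 1}"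

end

theory Submission
  imports Defs
begin

lemma alt_sum1:
  assumes "finite A"
  shows "(\<Sum>R\<in>Pow A. (-1::real) ^ card (A - R)) = (if A = {} then 1 else 0)"
  using assms
proof (induction A rule: finite_induct)
  case empty then show ?case by simp
next
  case (insert a A)
  have d: "Pow A \<inter> insert a ` Pow A = {}" using insert by auto
  have inj: "inj_on (insert a) (Pow A)" using insert by (auto simp: inj_on_def)
  have s1: "(\<Sum>R\<in>Pow A. (-1::real) ^ card (insert a A - R)) = - (\<Sum>R\<in>Pow A. (-1::real) ^ card (A - R))"
  proof -
    have "(\<Sum>R\<in>Pow A. (-1::real) ^ card (insert a A - R)) = (\<Sum>R\<in>Pow A. - ((-1::real) ^ card (A - R)))"
    proof (rule sum.cong)
      fix R assume "R \<in> Pow A"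
      then have "insert a A - R = insert a (A - R)" "a \<notin> A - R" using insert by auto
      then show "(-1::real) ^ card (insert a A - R) = - ((-1::real) ^ card (A - R))"
        using insert by simp
    qed simp
    then show ?thesis by (simp add: sum_negf)
  qed
  have s2: "(\<Sum>R\<in>insert a ` Pow A. (-1::real) ^ card (insert a A - R)) = (\<Sum>R\<in>Pow A. (-1::real) ^ card (A - R))"
  proof -
    have "(\<Sum>R\<in>insert a ` Pow A. (-1::real) ^ card (insert a A - R)) = (\<Sum>R\<in>Pow A. (-1::real) ^ card (insert a A - insert a R))"
      by (rule sum.reindex[OF inj, unfolded comp_def])
    also have "\<dots> = (\<Sum>R\<in>Pow A. (-1::real) ^ card (A - R))"
    proof (rule sum.cong)
      fix R assume "R \<in> Pow A"
      then have "insert a A - insert a R = A - R" using insert by auto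
      then show "(-1::real) ^ card (insert a A - insert a R) = (-1::real) ^ card (A - R)" by simp
    qed simp
    finally show ?thesis .
  qed
  have "(\<Sum>R\<in>Pow (insert a A). (-1::real) ^ card (insert a A - R)) =
     (\<Sum>R\<in>Pow A. (-1::real) ^ card (insert a A - R)) + (\<Sum>R\<in>insert a ` Pow A. (-1::real) ^ card (insert a A - R))"
    unfolding Pow_insert using d insert by (intro sum.union_disjoint) auto
  then show ?case using s1 s2 by simp
qed

lemma alt_sum2:
  assumes "finite A"
  shows "(\<Sum>R\<in>Pow A. (-1::real) ^ card R) = (if A = {} then 1 else 0)"
proof -
  have b: "bij_betw (\<lambda>R. A - R) (Pow A) (Pow A)"
    by (rule bij_betw_byWitness[where f'="\<lambda>R. A - R"]) auto
  have "(\<Sum>R\<in>Pow A. (-1::real) ^ card R) = (\<Sum>R\<in>Pow A. (-1::real) ^ card (A - (A - R)))"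
    by (intro sum.cong) (auto simp: Diff_Diff_Int Int_absorb1)
  also have "\<dots> = (\<Sum>R\<in>Pow A. (-1::real) ^ card (A - R))"
    using sum.reindex_bij_betw[OF b, of "\<lambda>R. (-1::real) ^ card (A - R)"] by simp
  finally show ?thesis using alt_sum1[OF assms] by simp
qed


lemma upper_sum:
  assumes "finite S" "U \<subseteq> S"
  shows "(\<Sum>T\<in>{T\<in>Pow S. U \<subseteq> T}. (-1::real) ^ card (S - T)) = of_bool (U = S)"
proof -
  have inj: "inj_on (\<lambda>R. U \<union> R) (Pow (S - U))" by (auto simp: inj_on_def)
  have im: "(\<lambda>R. U \<union> R) ` Pow (S - U) = {T\<in>Pow S. U \<subseteq> T}"
  proof
    show "{T\<in>Pow S. U \<subseteq> T} \<subseteq> (\<lambda>R. U \<union> R) ` Pow (S - U)"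
    proof
      fix T assume "T \<in> {T\<in>Pow S. U \<subseteq> T}"
      then have "T = U \<union> (T - U)" "T - U \<in> Pow (S - U)" by auto
      then show "T \<in> (\<lambda>R. U \<union> R) ` Pow (S - U)" by blast
    qed
  qed (use assms in auto)
  have "(\<Sum>T\<in>{T\<in>Pow S. U \<subseteq> T}. (-1::real) ^ card (S - T)) = (\<Sum>R\<in>Pow (S - U). (-1::real) ^ card (S - (U \<union> R)))"
    using sum.reindex[OF inj, of "\<lambda>T. (-1::real) ^ card (S - T)"] im by simp
  also have "\<dots> = (\<Sum>R\<in>Pow (S - U). (-1::real) ^ card ((S - U) - R))"
    by (intro sum.cong) (auto simp: Diff_eq Int_ac)
  also have "\<dots> = of_bool (U = S)" using alt_sum1[of "S - U"] assms by auto
  finally show ?thesis .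
qed

lemma lower_sum:
  assumes "finite X" "T \<subseteq> X"
  shows "(\<Sum>U\<in>{U\<in>Pow X. T \<subseteq> U}. (-1::real) ^ card (U - T)) = of_bool (T = X)"
proof -
  have inj: "inj_on (\<lambda>R. T \<union> R) (Pow (X - T))" by (auto simp: inj_on_def)
  have im: "(\<lambda>R. T \<union> R) ` Pow (X - T) = {U\<in>Pow X. T \<subseteq> U}"
  proof
    show "{U\<in>Pow X. T \<subseteq> U} \<subseteq> (\<lambda>R. T \<union> R) ` Pow (X - T)"
    proof
      fix U assume "U \<in> {U\<in>Pow X. T \<subseteq> U}"
      then have "U = T \<union> (U - T)" "U - T \<in> Pow (X - T)" by auto
      then show "U \<in> (\<lambda>R. T \<union> R) ` Pow (X - T)" by blast
    qed
  qed (use assms in auto)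
  have "(\<Sum>U\<in>{U\<in>Pow X. T \<subseteq> U}. (-1::real) ^ card (U - T)) = (\<Sum>R\<in>Pow (X - T). (-1::real) ^ card ((T \<union> R) - T))"
    using sum.reindex[OF inj, of "\<lambda>U. (-1::real) ^ card (U - T)"] im by simp
  also have "\<dots> = (\<Sum>R\<in>Pow (X - T). (-1::real) ^ card R)"
  proof (intro sum.cong refl)
    fix R assume "R \<in> Pow (X - T)"
    then have "(T \<union> R) - T = R" by auto
    then show "(-1::real) ^ card ((T \<union> R) - T) = (-1::real) ^ card R" by simp
  qed
  also have "\<dots> = of_bool (T = X)" using alt_sum2[of "X - T"] assms by auto
  finally show ?thesis .
qed

lemma prod_ind: "finite U \<Longrightarrow> (\<Prod>i\<in>U. of_bool (i \<in> T) :: real) = of_bool (U \<subseteq> T)"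
proof (cases "U \<subseteq> T")
  case True
  assume "finite U"
  then show ?thesis using True by (simp add: subset_iff)
next
  case False
  assume "finite U"
  then show ?thesis using False by (auto simp: prod_zero_iff)
qed

lemma eval_ind:
  assumes "T \<subseteq> {..<n}"
  shows "mlpoly_eval n c (\<lambda>i. i \<in> T) = (\<Sum>U\<in>Pow T. c U)"
proof -
  have "mlpoly_eval n c (\<lambda>i. i \<in> T) = (\<Sum>U\<in>Pow {..<n}. c U * of_bool (U \<subseteq> T))"
    unfolding mlpoly_eval_def
    by (intro sum.cong refl) (auto simp: prod_ind finite_subset)
  also have "\<dots> = (\<Sum>U\<in>Pow {..<n}. if U \<subseteq> T then c U else 0)"
    by (intro sum.cong) auto
  also have "\<dots> = (\<Sum>U\<in>Pow {..<n} \<inter> {U. U \<subseteq> T}. c U)"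
    by (simp add: sum.inter_restrict)
  also have "Pow {..<n} \<inter> {U. U \<subseteq> T} = Pow T" using assms by auto
  finally show ?thesis .
qed

definition mob :: "((nat \<Rightarrow> bool) \<Rightarrow> bool) \<Rightarrow> nat set \<Rightarrow> real" where
  "mob f S = (\<Sum>T\<in>Pow S. (-1::real) ^ card (S - T) * of_bool (f (\<lambda>i. i \<in> T)))"

lemma ind_cube: "T \<subseteq> {..<n} \<Longrightarrow> (\<lambda>i. i \<in> T) \<in> cube n"
  unfolding cube_def by auto

lemma mob_unique:
  assumes c: "\<forall>x\<in>cube n. mlpoly_eval n c x = of_bool (f x)" and S: "S \<subseteq> {..<n}"
  shows "c S = mob f S"
proof -
  have fS: "finite S" using S finite_subset by blast
  have "mob f S = (\<Sum>T\<in>Pow S. (-1::real) ^ card (S - T) * (\<Sum>U\<in>Pow T. c U))"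
    unfolding mob_def
  proof (intro sum.cong refl)
    fix T assume T: "T \<in> Pow S"
    then have T': "T \<subseteq> {..<n}" using S by auto
    show "(-1::real) ^ card (S - T) * of_bool (f (\<lambda>i. i \<in> T)) = (-1::real) ^ card (S - T) * (\<Sum>U\<in>Pow T. c U)"
      using c ind_cube[OF T'] eval_ind[OF T', of c] by simp
  qed
  also have "\<dots> = (\<Sum>T\<in>Pow S. \<Sum>U\<in>Pow S. (-1::real) ^ card (S - T) * (if U \<subseteq> T then c U else 0))"
  proof (intro sum.cong refl)
    fix T assume T: "T \<in> Pow S"
    have "(\<Sum>U\<in>Pow S. (if U \<subseteq> T then c U else 0)) = (\<Sum>U\<in>Pow S \<inter> {U. U \<subseteq> T}. c U)"
      using fS by (simp add: sum.inter_restrict)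
    also have "Pow S \<inter> {U. U \<subseteq> T} = Pow T" using T by auto
    finally show "(-1::real) ^ card (S - T) * (\<Sum>U\<in>Pow T. c U) = (\<Sum>U\<in>Pow S. (-1::real) ^ card (S - T) * (if U \<subseteq> T then c U else 0))"
      by (simp add: sum_distrib_left[symmetric])
  qed
  also have "\<dots> = (\<Sum>U\<in>Pow S. \<Sum>T\<in>Pow S. (-1::real) ^ card (S - T) * (if U \<subseteq> T then c U else 0))"
    by (rule sum.swap)
  also have "\<dots> = (\<Sum>U\<in>Pow S. c U * of_bool (U = S))"
  proof (intro sum.cong refl)
    fix U assume U: "U \<in> Pow S"
    have "(\<Sum>T\<in>Pow S. (-1::real) ^ card (S - T) * (if U \<subseteq> T then c U else 0))
        = c U * (\<Sum>T\<in>Pow S. if U \<subseteq> T then (-1::real) ^ card (S - T) else 0)"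
      by (simp add: sum_distrib_left if_distrib mult.commute cong: if_cong)
    also have "(\<Sum>T\<in>Pow S. if U \<subseteq> T then (-1::real) ^ card (S - T) else 0) = (\<Sum>T\<in>Pow S \<inter> {T. U \<subseteq> T}. (-1::real) ^ card (S - T))"
      using fS by (simp add: sum.inter_restrict)
    also have "Pow S \<inter> {T. U \<subseteq> T} = {T\<in>Pow S. U \<subseteq> T}" by auto
    finally show "(\<Sum>T\<in>Pow S. (-1::real) ^ card (S - T) * (if U \<subseteq> T then c U else 0)) = c U * of_bool (U = S)"
      using upper_sum[OF fS, of U] U by simp
  qed
  also have "\<dots> = c S" using fS by (simp add: sum.delta' cong: sum.cong)
  finally show ?thesis by simp
qed


lemma mob_exists:
  assumes x: "x \<in> cube n"
  shows "mlpoly_eval n (\<lambda>S. if S \<subseteq> {..<n} then mob f S else 0) x = of_bool (f x)"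
proof -
  define X where "X = {i. x i}"
  have X: "X \<subseteq> {..<n}" using x unfolding X_def cube_def by (auto simp: not_le[symmetric])
  have fX: "finite X" using X finite_subset by blast
  have xX: "x = (\<lambda>i. i \<in> X)" unfolding X_def by simp
  define b where "b T = (of_bool (f (\<lambda>i. i \<in> T)) :: real)" for T
  have "mlpoly_eval n (\<lambda>S. if S \<subseteq> {..<n} then mob f S else 0) x = (\<Sum>U\<in>Pow X. if U \<subseteq> {..<n} then mob f U else 0)"
    unfolding xX by (rule eval_ind[OF X])
  also have "\<dots> = (\<Sum>U\<in>Pow X. \<Sum>T\<in>Pow X. if T \<subseteq> U then (-1::real) ^ card (U - T) * b T else 0)"
  proof (intro sum.cong refl)
    fix U assume U: "U \<in> Pow X"
    have "(\<Sum>T\<in>Pow X. if T \<subseteq> U then (-1::real) ^ card (U - T) * b T else 0) = (\<Sum>T\<in>Pow X \<inter> {T. T \<subseteq> U}. (-1::real) ^ card (U - T) * b T)"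
      using fX by (simp add: sum.inter_restrict)
    also have "Pow X \<inter> {T. T \<subseteq> U} = Pow U" using U by auto
    finally show "(if U \<subseteq> {..<n} then mob f U else 0) = (\<Sum>T\<in>Pow X. if T \<subseteq> U then (-1::real) ^ card (U - T) * b T else 0)"
      using U X unfolding mob_def b_def by auto
  qed
  also have "\<dots> = (\<Sum>T\<in>Pow X. \<Sum>U\<in>Pow X. if T \<subseteq> U then (-1::real) ^ card (U - T) * b T else 0)"
    by (rule sum.swap)
  also have "\<dots> = (\<Sum>T\<in>Pow X. b T * of_bool (T = X))"
  proof (intro sum.cong refl)
    fix T assume T: "T \<in> Pow X"
    have "(\<Sum>U\<in>Pow X. if T \<subseteq> U then (-1::real) ^ card (U - T) * b T else 0)
        = b T * (\<Sum>U\<in>Pow X. if T \<subseteq> U then (-1::real) ^ card (U - T) else 0)"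
      by (simp add: sum_distrib_left if_distrib mult.commute cong: if_cong)
    also have "(\<Sum>U\<in>Pow X. if T \<subseteq> U then (-1::real) ^ card (U - T) else 0) = (\<Sum>U\<in>Pow X \<inter> {U. T \<subseteq> U}. (-1::real) ^ card (U - T))"
      using fX by (simp add: sum.inter_restrict)
    also have "Pow X \<inter> {U. T \<subseteq> U} = {U\<in>Pow X. T \<subseteq> U}" by auto
    finally show "(\<Sum>U\<in>Pow X. if T \<subseteq> U then (-1::real) ^ card (U - T) * b T else 0) = b T * of_bool (T = X)"
      using lower_sum[OF fX, of T] T by simp
  qed
  also have "\<dots> = b X" using fX by (simp add: sum.delta' cong: sum.cong)
  finally show ?thesis unfolding b_def using xX by simp
qed

lemma ml_coeffs_eq:
  assumes "S \<subseteq> {..<n}"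
  shows "ml_coeffs n f S = mob f S"
proof -
  define c0 where "c0 = (\<lambda>S. if S \<subseteq> {..<n} then mob f S else 0)"
  have "ml_coeffs n f = c0"
    unfolding ml_coeffs_def
  proof (rule the_equality)
    show "(\<forall>S. \<not> S \<subseteq> {..<n} \<longrightarrow> c0 S = 0) \<and> (\<forall>x\<in>cube n. mlpoly_eval n c0 x = of_bool (f x))"
      unfolding c0_def using mob_exists by auto
  next
    fix c assume c: "(\<forall>S. \<not> S \<subseteq> {..<n} \<longrightarrow> c S = 0) \<and> (\<forall>x\<in>cube n. mlpoly_eval n c x = of_bool (f x))"
    show "c = c0"
    proof
      fix S show "c S = c0 S" unfolding c0_def using c mob_unique[of n c f S] by auto
    qed
  qed
  then show ?thesis using assms unfolding c0_def by simp
qed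

lemma homog_solve:
  fixes a :: "'b \<Rightarrow> 'a \<Rightarrow> real"
  assumes "finite E" "finite U" "card E < card U"
  shows "\<exists>w. (\<exists>u\<in>U. w u \<noteq> 0) \<and> (\<forall>e\<in>E. (\<Sum>u\<in>U. a e u * w u) = 0)"
  using assms
proof (induction E arbitrary: U a rule: finite_induct)
  case empty
  then obtain u where "u \<in> U" by fastforce
  then show ?case by (intro exI[of _ "\<lambda>_. 1"]) auto
next
  case (insert e E)
  show ?case
  proof (cases "\<forall>u\<in>U. a e u = 0")
    case True
    have "card E < card U" using insert by simp
    then obtain w where w: "\<exists>u\<in>U. w u \<noteq> 0" "\<forall>f\<in>E. (\<Sum>u\<in>U. a f u * w u) = 0"
      using insert.IH[OF insert.prems(1)] by blast
    have "(\<Sum>u\<in>U. a e u * w u) = 0" using True by simp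
    then show ?thesis using w by auto
  next
    case False
    then obtain u0 where u0: "u0 \<in> U" "a e u0 \<noteq> 0" by blast
    define U' where "U' = U - {u0}"
    have fU': "finite U'" using insert U'_def by simp
    have cU': "card E < card U'" using insert u0 unfolding U'_def by simp
    define a' where "a' f u = a f u - a f u0 * a e u / a e u0" for f u
    obtain w' where w': "\<exists>u\<in>U'. w' u \<noteq> 0" "\<forall>f\<in>E. (\<Sum>u\<in>U'. a' f u * w' u) = 0"
      using insert.IH[OF fU' cU', of a'] by blast
    define t where "t = (\<Sum>u\<in>U'. a e u * w' u)"
    define w where "w = w'(u0 := - t / a e u0)"
    have split: "(\<Sum>u\<in>U. a f u * w u) = a f u0 * w u0 + (\<Sum>u\<in>U'. a f u * w' u)" for f
    proof -
      have "(\<Sum>u\<in>U. a f u * w u) = a f u0 * w u0 + (\<Sum>u\<in>U'. a f u * w u)"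
        unfolding U'_def using insert.prems u0 by (simp add: sum.remove)
      also have "(\<Sum>u\<in>U'. a f u * w u) = (\<Sum>u\<in>U'. a f u * w' u)"
        unfolding w_def U'_def by (intro sum.cong) auto
      finally show ?thesis .
    qed
    have "\<forall>f\<in>insert e E. (\<Sum>u\<in>U. a f u * w u) = 0"
    proof
      fix f assume f: "f \<in> insert e E"
      show "(\<Sum>u\<in>U. a f u * w u) = 0"
      proof (cases "f = e")
        case True
        then show ?thesis using split[of e] u0 unfolding w_def t_def by simp
      next
        case False
        then have fE: "f \<in> E" using f by simp
        have "(\<Sum>u\<in>U'. a' f u * w' u) = (\<Sum>u\<in>U'. a f u * w' u) - a f u0 / a e u0 * t"
          unfolding a'_def t_def by (simp add: algebra_simps sum_subtractf sum_distrib_left)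
        then have "(\<Sum>u\<in>U'. a f u * w' u) = a f u0 / a e u0 * t" using w'(2) fE by simp
        then show ?thesis using split[of f] u0 unfolding w_def by simp
      qed
    qed
    moreover have "\<exists>u\<in>U. w u \<noteq> 0" using w'(1) unfolding w_def U'_def by auto
    ultimately show ?thesis by blast
  qed
qed

definition flip :: "nat set \<Rightarrow> nat \<Rightarrow> nat set" where
  "flip T i = (if i \<in> T then T - {i} else insert i T)"

definition sg :: "nat set \<Rightarrow> nat \<Rightarrow> real" where
  "sg T i = (-1::real) ^ card {k\<in>T. k < i}"

definition hA :: "nat set \<Rightarrow> (nat set \<Rightarrow> real) \<Rightarrow> nat set \<Rightarrow> real" where
  "hA S z T = (\<Sum>i\<in>S. sg T i * z (flip T i))"

lemma flip_flip[simp]: "flip (flip T i) i = T"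
  unfolding flip_def by auto

lemma flip_comm: "flip (flip T i) j = flip (flip T j) i"
  unfolding flip_def by auto

lemma flip_sub: "T \<subseteq> S \<Longrightarrow> i \<in> S \<Longrightarrow> flip T i \<subseteq> S"
  unfolding flip_def by auto

lemma flip_inj: "flip T i = flip T j \<Longrightarrow> i = j"
  unfolding flip_def by (auto split: if_splits)

lemma flip_mem: "x \<in> flip T i \<longleftrightarrow> (if x = i then i \<notin> T else x \<in> T)"
  unfolding flip_def by auto

lemma sg_sq: "sg T i * sg T i = 1"
  unfolding sg_def by (simp add: power_mult_distrib[symmetric])

lemma sg_flip_le: "j \<le> i \<Longrightarrow> sg (flip T i) j = sg T j"
proof -
  assume "j \<le> i"
  then have "{k\<in>flip T i. k < j} = {k\<in>T. k < j}" unfolding flip_def by auto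
  then show ?thesis unfolding sg_def by simp
qed

lemma card_flip_sign: "finite A \<Longrightarrow> (-1::real) ^ card (flip A i) = - ((-1) ^ card A)"
proof (cases "i \<in> A")
  case True
  assume "finite A"
  then have "card A = Suc (card (A - {i}))" using True by (metis card_Suc_Diff1)
  then have "(-1::real) ^ card A = - ((-1) ^ card (A - {i}))" by simp
  then show ?thesis using True unfolding flip_def by simp
next
  case False
  assume "finite A"
  then show ?thesis using False unfolding flip_def by simp
qed

lemma sg_flip_gt: "finite T \<Longrightarrow> i < j \<Longrightarrow> sg (flip T i) j = - sg T j"
proof -
  assume "finite T" "i < j"
  then have "{k\<in>flip T i. k < j} = flip {k\<in>T. k < j} i" unfolding flip_def by auto
  then show ?thesis unfolding sg_def using card_flip_sign[of "{k\<in>T. k < j}" i] \<open>finite T\<close> by simp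
qed

lemma sg_anti: "finite T \<Longrightarrow> i \<noteq> j \<Longrightarrow> sg T i * sg (flip T i) j = - (sg T j * sg (flip T j) i)"
proof -
  assume T: "finite T" and ij: "i \<noteq> j"
  show ?thesis
  proof (cases "i < j")
    case True
    then show ?thesis using sg_flip_gt[OF T True] sg_flip_le[of i j T] by simp
  next
    case False
    then have "j < i" using ij by simp
    then show ?thesis using sg_flip_gt[OF T \<open>j < i\<close>] sg_flip_le[of j i T] by simp
  qed
qed

lemma antisym_sum_zero:
  fixes G :: "nat \<Rightarrow> nat \<Rightarrow> real"
  assumes "\<And>i j. i \<in> S \<Longrightarrow> j \<in> S \<Longrightarrow> G i j = - G j i"
  shows "(\<Sum>i\<in>S. \<Sum>j\<in>S. G i j) = 0"
proof -
  have "(\<Sum>i\<in>S. \<Sum>j\<in>S. G i j) = (\<Sum>j\<in>S. \<Sum>i\<in>S. G i j)" by (rule sum.swap)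
  also have "\<dots> = (\<Sum>j\<in>S. \<Sum>i\<in>S. - G j i)" by (intro sum.cong refl assms)
  also have "\<dots> = - (\<Sum>i\<in>S. \<Sum>j\<in>S. G i j)" by (simp add: sum_negf)
  finally show ?thesis by simp
qed

lemma hA_sq:
  assumes S: "finite S" and T: "T \<subseteq> S"
  shows "hA S (hA S z) T = real (card S) * z T"
proof -
  have fT: "finite T" using S T finite_subset by blast
  define F where "F i j = sg T i * sg (flip T i) j * z (flip (flip T i) j)" for i j
  have "hA S (hA S z) T = (\<Sum>i\<in>S. \<Sum>j\<in>S. F i j)"
    unfolding hA_def F_def by (simp add: sum_distrib_left mult.assoc)
  also have "\<dots> = (\<Sum>i\<in>S. \<Sum>j\<in>S. (if i = j then F i j else 0)) + (\<Sum>i\<in>S. \<Sum>j\<in>S. (if i \<noteq> j then F i j else 0))"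
    unfolding sum.distrib[symmetric] by (intro sum.cong refl) simp
  also have "(\<Sum>i\<in>S. \<Sum>j\<in>S. (if i \<noteq> j then F i j else 0)) = 0"
  proof (rule antisym_sum_zero)
    fix i j assume "i \<in> S" "j \<in> S"
    show "(if i \<noteq> j then F i j else 0) = - (if j \<noteq> i then F j i else 0)"
      unfolding F_def using sg_anti[OF fT, of i j] flip_comm[of T i j] by auto
  qed
  also have "(\<Sum>i\<in>S. \<Sum>j\<in>S. (if i = j then F i j else 0)) = (\<Sum>i\<in>S. F i i)"
    using S by (simp add: sum.delta)
  also have "\<dots> = (\<Sum>i\<in>S. z T)"
    unfolding F_def using sg_flip_le[of _ _ T] sg_sq by (intro sum.cong refl) simp
  finally show ?thesis by simp
qed

lemma delta_w: "finite U \<Longrightarrow> (\<Sum>u\<in>U. of_bool (u = c) * (w u::real)) = (if c \<in> U then w c else 0)"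
proof -
  assume fU: "finite U"
  have "(\<Sum>u\<in>U. of_bool (u = c) * (w u::real)) = (\<Sum>u\<in>U. if u = c then w u else 0)"
    by (intro sum.cong) auto
  then show ?thesis using fU by (simp add: sum.delta')
qed

lemma hA_lin: "hA S (\<lambda>T. a * x T + y T) T = a * hA S x T + hA S y T"
  unfolding hA_def by (simp add: algebra_simps sum.distrib sum_distrib_left)

lemma sg_nz: "sg T i \<noteq> 0"
  using sg_sq[of T i] by auto

lemma huang_vec:
  assumes S: "finite S" "S \<noteq> {}" and H: "H \<subseteq> Pow S" and cH: "card H > 2 ^ (card S - 1)"
  shows "\<exists>v. (\<exists>T\<in>H. v T \<noteq> 0) \<and> (\<forall>T\<in>Pow S - H. v T = 0) \<and>
             (\<forall>T\<in>Pow S. hA S v T = sqrt (real (card S)) * v T)"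
proof -
  obtain m where m: "m \<in> S" using S by blast
  define d where "d = card S"
  have d1: "d \<ge> 1" using S unfolding d_def by (simp add: Suc_le_eq card_gt_0_iff)
  define U where "U = Pow (S - {m})"
  define E where "E = Pow S - H"
  have fU: "finite U" unfolding U_def using S by simp
  have fE: "finite E" unfolding E_def using S by simp
  have cU: "card U = 2 ^ (d - 1)" unfolding U_def d_def using S m by (simp add: card_Pow)
  have "card E = 2 ^ d - card H" unfolding E_def d_def using S H by (simp add: card_Diff_subset card_Pow finite_subset)
  moreover have "(2::nat) ^ d = 2 * 2 ^ (d - 1)" using d1 by (metis Suc_diff_le diff_Suc_1 power_Suc)
  moreover have "(0::nat) < 2 ^ (d - 1)" by simp
  ultimately have cE: "card E < card U" using cH cU unfolding d_def by linarith
  define a where "a T u = sqrt d * of_bool (u = T) + (\<Sum>i\<in>S. sg T i * of_bool (flip T i = u))" for T u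
  obtain w where w: "\<exists>u\<in>U. w u \<noteq> 0" "\<forall>e\<in>E. (\<Sum>u\<in>U. a e u * w u) = 0"
    using homog_solve[OF fE fU cE, of a] by blast
  define w0 where "w0 T = (if T \<in> U then w T else 0)" for T
  define v where "v T = sqrt d * w0 T + hA S w0 T" for T
  have eq: "(\<Sum>u\<in>U. a T u * w u) = v T" for T
  proof -
    have "(\<Sum>u\<in>U. a T u * w u) = sqrt d * (\<Sum>u\<in>U. of_bool (u = T) * w u) + (\<Sum>u\<in>U. \<Sum>i\<in>S. sg T i * (of_bool (flip T i = u) * w u))"
      unfolding a_def by (simp add: algebra_simps sum.distrib sum_distrib_left sum_distrib_right)
    also have "(\<Sum>u\<in>U. \<Sum>i\<in>S. sg T i * (of_bool (flip T i = u) * w u)) = (\<Sum>i\<in>S. sg T i * (\<Sum>u\<in>U. of_bool (u = flip T i) * w u))"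
      by (subst sum.swap) (simp add: sum_distrib_left eq_commute)
    finally show ?thesis unfolding v_def hA_def w0_def using delta_w[OF fU] by simp
  qed
  have vE: "\<forall>T\<in>Pow S - H. v T = 0" using w(2) eq unfolding E_def by simp
  have eig: "\<forall>T\<in>Pow S. hA S v T = sqrt (real (card S)) * v T"
  proof
    fix T assume T: "T \<in> Pow S"
    have "hA S v T = sqrt d * hA S w0 T + hA S (hA S w0) T"
      unfolding v_def by (rule hA_lin)
    also have "hA S (hA S w0) T = d * w0 T" using hA_sq[OF S(1), of T w0] T unfolding d_def by simp
    finally show "hA S v T = sqrt (real (card S)) * v T"
      unfolding v_def d_def by (simp add: algebra_simps)
  qed
  obtain u where u: "u \<in> U" "w u \<noteq> 0" using w(1) by blast
  define T where "T = insert m u"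
  have mu: "m \<notin> u" using u unfolding U_def by auto
  have TS: "T \<in> Pow S" using u m unfolding T_def U_def by auto
  have w0T: "w0 T = 0" unfolding w0_def T_def U_def by auto
  have "hA S w0 T = sg T m * w0 (flip T m) + (\<Sum>i\<in>S - {m}. sg T i * w0 (flip T i))"
    unfolding hA_def using S m by (simp add: sum.remove)
  also have "(\<Sum>i\<in>S - {m}. sg T i * w0 (flip T i)) = 0"
  proof (intro sum.neutral ballI)
    fix i assume "i \<in> S - {m}"
    then have "m \<in> flip T i" unfolding T_def flip_def by auto
    then show "sg T i * w0 (flip T i) = 0" unfolding w0_def U_def by auto
  qed
  also have "flip T m = u" unfolding T_def flip_def using mu by auto
  finally have "v T = sg T m * w u" unfolding v_def using w0T u unfolding w0_def by simp
  then have "v T \<noteq> 0" using sg_nz u by simp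
  then have "T \<in> H" using vE TS by blast
  then show ?thesis using \<open>v T \<noteq> 0\<close> vE eig by blast
qed

lemma cube_img: "cube n = (\<lambda>T i. i \<in> T) ` Pow {..<n}"
proof
  show "cube n \<subseteq> (\<lambda>T i. i \<in> T) ` Pow {..<n}"
  proof
    fix x assume x: "x \<in> cube n"
    then have "{i. x i} \<in> Pow {..<n}" unfolding cube_def by (auto simp: not_le[symmetric])
    moreover have "x = (\<lambda>i. i \<in> {i. x i})" by simp
    ultimately show "x \<in> (\<lambda>T i. i \<in> T) ` Pow {..<n}" by blast
  qed
qed (auto simp: cube_def)

lemma ind_inj: "inj_on (\<lambda>T i. i \<in> T) A"
  by (rule inj_onI) (metis Collect_mem_eq)

lemma finite_cube: "finite (cube n)"
  unfolding cube_img by simp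

lemma sum_cube: "(\<Sum>x\<in>cube n. F x) = (\<Sum>T\<in>Pow {..<n}. F (\<lambda>i. i \<in> T))"
  unfolding cube_img by (subst sum.reindex[OF ind_inj]) (simp add: comp_def)

lemma spec_bdd: "bdd_above {sqrt (\<Sum>x\<in>cube n. (\<Sum>y\<in>cube n. sens_adj n f x y * v y)\<^sup>2) | v.
                         (\<Sum>y\<in>cube n. (v y)\<^sup>2) = 1}"
proof (rule bdd_aboveI, clarify)
  fix v :: "(nat \<Rightarrow> bool) \<Rightarrow> real" assume v: "(\<Sum>y\<in>cube n. (v y)\<^sup>2) = 1"
  define N where "N = real (card (cube n))"
  have vb: "\<bar>v y\<bar> \<le> 1" if "y \<in> cube n" for y
  proof -
    have "(v y)\<^sup>2 \<le> 1" using member_le_sum[of y "cube n" "\<lambda>y. (v y)\<^sup>2"] that finite_cube v by simp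
    then show ?thesis by (simp add: abs_square_le_1)
  qed
  have rb: "\<bar>\<Sum>y\<in>cube n. sens_adj n f x y * v y\<bar> \<le> N" for x
  proof -
    have "\<bar>\<Sum>y\<in>cube n. sens_adj n f x y * v y\<bar> \<le> (\<Sum>y\<in>cube n. \<bar>sens_adj n f x y * v y\<bar>)" by (rule sum_abs)
    also have "\<dots> \<le> (\<Sum>y\<in>cube n. 1)"
    proof (rule sum_mono)
      fix y assume "y \<in> cube n"
      then show "\<bar>sens_adj n f x y * v y\<bar> \<le> 1" using vb[of y] unfolding sens_adj_def
        by (auto simp: abs_mult)
    qed
    finally show ?thesis unfolding N_def by simp
  qed
  have "(\<Sum>x\<in>cube n. (\<Sum>y\<in>cube n. sens_adj n f x y * v y)\<^sup>2) \<le> (\<Sum>x\<in>cube n. N\<^sup>2)"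
  proof (rule sum_mono)
    fix x
    have "\<bar>\<Sum>y\<in>cube n. sens_adj n f x y * v y\<bar>\<^sup>2 \<le> N\<^sup>2"
      using rb[of x] by (intro power_mono) auto
    then show "(\<Sum>y\<in>cube n. sens_adj n f x y * v y)\<^sup>2 \<le> N\<^sup>2" by simp
  qed
  then show "sqrt (\<Sum>x\<in>cube n. (\<Sum>y\<in>cube n. sens_adj n f x y * v y)\<^sup>2) \<le> sqrt (N * N\<^sup>2)"
    unfolding N_def by simp
qed


lemma spec_lower:
  assumes S: "S \<subseteq> {..<n}" "S \<noteq> {}" and H: "H \<subseteq> Pow S" and cH: "card H > 2 ^ (card S - 1)"
    and edge: "\<And>T i. T \<in> H \<Longrightarrow> i \<in> S \<Longrightarrow> flip T i \<in> H \<Longrightarrow>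
                   f (\<lambda>j. j \<in> T) \<noteq> f (\<lambda>j. j \<in> flip T i)"
  shows "sqrt (real (card S)) \<le> spec_sens n f"
proof -
  have fS: "finite S" using S finite_subset by blast
  have fH: "finite H" using H fS finite_subset by blast
  have HP: "H \<subseteq> Pow {..<n}" using H S by auto
  obtain v where v: "\<exists>T\<in>H. v T \<noteq> 0" "\<forall>T\<in>Pow S - H. v T = 0" "\<forall>T\<in>Pow S. hA S v T = sqrt (real (card S)) * v T"
    using huang_vec[OF fS S(2) H cH] by blast
  define d where "d = real (card S)"
  define Q where "Q = (\<Sum>T\<in>H. (v T)\<^sup>2)"
  have Qpos: "Q > 0"
  proof -
    obtain T0 where "T0 \<in> H" "v T0 \<noteq> 0" using v(1) by blast
    then have "(v T0)\<^sup>2 \<le> Q" unfolding Q_def using fH by (intro member_le_sum) auto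
    moreover have "(v T0)\<^sup>2 > 0" using \<open>v T0 \<noteq> 0\<close> by simp
    ultimately show ?thesis by linarith
  qed
  define Nv where "Nv = sqrt Q"
  have Nv: "Nv > 0" "Nv\<^sup>2 = Q" unfolding Nv_def using Qpos by auto
  define u where "u x = (if {i. x i} \<in> H then \<bar>v {i. x i}\<bar> / Nv else 0)" for x :: "nat \<Rightarrow> bool"
  have uT: "u (\<lambda>i. i \<in> T) = (if T \<in> H then \<bar>v T\<bar> / Nv else 0)" for T unfolding u_def by simp
  have u0: "u x \<ge> 0" for x unfolding u_def using Nv by auto
  have unorm: "(\<Sum>y\<in>cube n. (u y)\<^sup>2) = 1"
  proof -
    have "(\<Sum>y\<in>cube n. (u y)\<^sup>2) = (\<Sum>T\<in>Pow {..<n}. (if T \<in> H then (v T)\<^sup>2 / Q else 0))"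
      unfolding sum_cube uT using Nv by (intro sum.cong refl) (auto simp: power_divide)
    also have "\<dots> = (\<Sum>T\<in>Pow {..<n} \<inter> H. (v T)\<^sup>2 / Q)" by (simp add: sum.inter_restrict)
    also have "Pow {..<n} \<inter> H = H" using HP by auto
    also have "(\<Sum>T\<in>H. (v T)\<^sup>2 / Q) = 1" using Qpos unfolding Q_def[symmetric] by (simp add: sum_divide_distrib[symmetric] Q_def)
    finally show ?thesis .
  qed
  define Au where "Au x = (\<Sum>y\<in>cube n. sens_adj n f x y * u y)" for x
  have Au0: "Au x \<ge> 0" for x unfolding Au_def sens_adj_def using u0 by (intro sum_nonneg) auto
  have key: "Au (\<lambda>j. j \<in> T) \<ge> sqrt d * \<bar>v T\<bar> / Nv" if T: "T \<in> H" for T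
  proof -
    have TS: "T \<subseteq> S" using T H by auto
    have TC: "(\<lambda>j. j \<in> T) \<in> cube n" using TS S by (intro ind_cube) auto
    have sub: "flip T ` S \<subseteq> Pow {..<n}" using flip_sub[OF TS] S by auto
    have injf: "inj_on (flip T) S" by (rule inj_onI) (rule flip_inj)
    have tm: "sens_adj n f (\<lambda>j. j \<in> T) (\<lambda>j. j \<in> flip T i) * u (\<lambda>j. j \<in> flip T i) = \<bar>v (flip T i)\<bar> / Nv"
      if i: "i \<in> S" for i
    proof (cases "flip T i \<in> H")
      case True
      have "{j. (j \<in> T) \<noteq> (j \<in> flip T i)} = {i}" by (auto simp: flip_mem)
      moreover have "(\<lambda>j. j \<in> flip T i) \<in> cube n" using flip_sub[OF TS i] S by (intro ind_cube) auto
      ultimately have "sens_adj n f (\<lambda>j. j \<in> T) (\<lambda>j. j \<in> flip T i) = 1"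
        unfolding sens_adj_def using TC edge[OF T i True] by simp
      then show ?thesis using True uT by simp
    next
      case False
      then have "v (flip T i) = 0" using v(2) flip_sub[OF TS i] by auto
      then show ?thesis using False uT by simp
    qed
    have "sqrt d * \<bar>v T\<bar> / Nv = \<bar>hA S v T\<bar> / Nv" using v(3) TS unfolding d_def by (simp add: abs_mult)
    also have "\<dots> \<le> (\<Sum>i\<in>S. \<bar>sg T i * v (flip T i)\<bar>) / Nv"
      unfolding hA_def using Nv by (intro divide_right_mono sum_abs) auto
    also have "\<dots> = (\<Sum>i\<in>S. \<bar>v (flip T i)\<bar> / Nv)"
    proof -
      have "\<bar>sg T i\<bar> = 1" for i unfolding sg_def by (simp add: power_abs)
      then show ?thesis by (simp add: abs_mult sum_divide_distrib)
    qed
    also have "\<dots> = (\<Sum>T'\<in>flip T ` S. sens_adj n f (\<lambda>j. j \<in> T) (\<lambda>j. j \<in> T') * u (\<lambda>j. j \<in> T'))"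
      by (subst sum.reindex[OF injf]) (simp add: comp_def tm)
    also have "\<dots> \<le> (\<Sum>T'\<in>Pow {..<n}. sens_adj n f (\<lambda>j. j \<in> T) (\<lambda>j. j \<in> T') * u (\<lambda>j. j \<in> T'))"
      using sub u0 by (intro sum_mono2) (auto simp: sens_adj_def)
    also have "\<dots> = Au (\<lambda>j. j \<in> T)"
      unfolding Au_def by (rule sum_cube[symmetric])
    finally show ?thesis .
  qed
  have "d = (\<Sum>T\<in>H. d * (v T)\<^sup>2 / Q)"
    using Qpos unfolding Q_def by (simp add: sum_distrib_left[symmetric] sum_divide_distrib[symmetric])
  also have "\<dots> \<le> (\<Sum>T\<in>H. (Au (\<lambda>j. j \<in> T))\<^sup>2)"
  proof (rule sum_mono)
    fix T assume T: "T \<in> H"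
    have "0 \<le> sqrt d * \<bar>v T\<bar> / Nv" using Nv unfolding d_def by simp
    then have "(sqrt d * \<bar>v T\<bar> / Nv)\<^sup>2 \<le> (Au (\<lambda>j. j \<in> T))\<^sup>2" using key[OF T] by (intro power_mono) auto
    moreover have "(sqrt d * \<bar>v T\<bar> / Nv)\<^sup>2 = d * (v T)\<^sup>2 / Q"
      using Nv unfolding d_def by (simp add: power_divide power_mult_distrib)
    ultimately show "d * (v T)\<^sup>2 / Q \<le> (Au (\<lambda>j. j \<in> T))\<^sup>2" by simp
  qed
  also have "\<dots> \<le> (\<Sum>T\<in>Pow {..<n}. (Au (\<lambda>j. j \<in> T))\<^sup>2)"
    using HP by (intro sum_mono2) auto
  also have "\<dots> = (\<Sum>x\<in>cube n. (Au x)\<^sup>2)" by (rule sum_cube[symmetric])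
  finally have "sqrt d \<le> sqrt (\<Sum>x\<in>cube n. (Au x)\<^sup>2)" by simp
  also have "\<dots> \<le> spec_sens n f"
    unfolding spec_sens_def Au_def
    by (rule cSup_upper[OF _ spec_bdd]) (use unorm in blast)
  finally show ?thesis unfolding d_def .
qed

lemma parity_flip:
  assumes "finite S" "T \<subseteq> S" "i \<in> S"
  shows "even (card (S - flip T i)) \<longleftrightarrow> \<not> even (card (S - T))"
proof -
  have "S - flip T i = flip (S - T) i" using assms unfolding flip_def by auto
  then have "(-1::real) ^ card (S - flip T i) = - ((-1) ^ card (S - T))"
    using card_flip_sign[of "S - T" i] assms by simp
  then show ?thesis by (auto simp: minus_one_power_iff split: if_splits)
qed

lemma Hb_edge:
  assumes fS: "finite S"
    and T: "T \<in> {T\<in>Pow S. f (\<lambda>i. i \<in> T) = (even (card (S - T)) = b)}" and i: "i \<in> S"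
    and T': "flip T i \<in> {T\<in>Pow S. f (\<lambda>i. i \<in> T) = (even (card (S - T)) = b)}"
  shows "f (\<lambda>j. j \<in> T) \<noteq> f (\<lambda>j. j \<in> flip T i)"
  using T T' parity_flip[OF fS _ i, of T] by auto

theorem theorem1p1:
  fixes n :: nat and f :: "(nat \<Rightarrow> bool) \<Rightarrow> bool"
  shows "real (bdeg n f) \<le> (spec_sens n f)\<^sup>2"
proof (cases "bdeg n f = 0")
  case True
  then show ?thesis by simp
next
  case False
  define Ds where "Ds = {card S | S. S \<subseteq> {..<n} \<and> ml_coeffs n f S \<noteq> 0}"
  have "Ds \<subseteq> card ` Pow {..<n}" unfolding Ds_def by auto
  then have "finite Ds" by (rule finite_subset) simp
  then have "bdeg n f \<in> {0} \<union> Ds" unfolding bdeg_def Ds_def[symmetric] by (intro Max_in) auto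
  then obtain S where S: "S \<subseteq> {..<n}" "ml_coeffs n f S \<noteq> 0" "card S = bdeg n f"
    using False unfolding Ds_def by auto
  define d where "d = card S"
  have fS: "finite S" using S finite_subset by blast
  have Sne: "S \<noteq> {}" using S False by auto
  have d1: "d \<ge> 1" using fS Sne unfolding d_def by (simp add: Suc_le_eq card_gt_0_iff)
  have mob: "mob f S \<noteq> 0" using S ml_coeffs_eq by simp
  define Hb where "Hb b = {T\<in>Pow S. f (\<lambda>i. i \<in> T) = (even (card (S - T)) = b)}" for b
  define P where "P = Hb True"
  have PS: "P \<subseteq> Pow S" unfolding P_def Hb_def by auto
  have fP: "finite P" using PS fS finite_subset by blast
  have "(\<Sum>T\<in>Pow S. (-1::real) ^ card (S - T) * (2 * of_bool (f (\<lambda>i. i \<in> T)) - 1))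
        = 2 * mob f S - (\<Sum>T\<in>Pow S. (-1::real) ^ card (S - T))"
    unfolding mob_def by (simp add: algebra_simps sum_subtractf sum_distrib_left)
  also have "\<dots> = 2 * mob f S" using alt_sum1[OF fS] Sne by simp
  finally have e1: "(\<Sum>T\<in>Pow S. (-1::real) ^ card (S - T) * (2 * of_bool (f (\<lambda>i. i \<in> T)) - 1)) = 2 * mob f S" .
  have "(\<Sum>T\<in>Pow S. (-1::real) ^ card (S - T) * (2 * of_bool (f (\<lambda>i. i \<in> T)) - 1))
        = (\<Sum>T\<in>Pow S. 2 * of_bool (T \<in> P) - 1)"
    unfolding P_def Hb_def by (intro sum.cong refl) (auto simp: minus_one_power_iff)
  also have "\<dots> = 2 * (\<Sum>T\<in>Pow S. of_bool (T \<in> P)) - real (card (Pow S))"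
    by (simp add: sum_subtractf sum_distrib_left)
  also have "(\<Sum>T\<in>Pow S. of_bool (T \<in> P) :: real) = real (card P)"
  proof -
    have "Pow S \<inter> {T. T \<in> P} = P" using PS by auto
    then show ?thesis using fS by simp
  qed
  finally have "2 * real (card P) - real (card (Pow S)) \<noteq> 0" using e1 mob by simp
  then have "real (2 * card P) \<noteq> real (2 ^ d)" unfolding d_def using fS by (simp add: card_Pow)
  then have neq: "2 * card P \<noteq> 2 ^ d" by (metis of_nat_eq_iff)
  have pow: "(2::nat) ^ d = 2 * 2 ^ (d - 1)" using d1 by (metis Suc_diff_le diff_Suc_1 power_Suc)
  obtain H where H: "H \<subseteq> Pow S" "card H > 2 ^ (card S - 1)"
    and edge: "\<And>T i. T \<in> H \<Longrightarrow> i \<in> S \<Longrightarrow> flip T i \<in> H \<Longrightarrow> f (\<lambda>j. j \<in> T) \<noteq> f (\<lambda>j. j \<in> flip T i)"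
  proof (cases "2 * card P > 2 ^ d")
    case True
    then have "card P > 2 ^ (card S - 1)" using pow unfolding d_def by simp
    show ?thesis
    proof (rule that[of P])
      fix T i assume a: "T \<in> P" "i \<in> S" "flip T i \<in> P"
      show "f (\<lambda>j. j \<in> T) \<noteq> f (\<lambda>j. j \<in> flip T i)"
        using Hb_edge[OF fS a(1)[unfolded P_def Hb_def] a(2) a(3)[unfolded P_def Hb_def]] .
    qed (use PS \<open>card P > 2 ^ (card S - 1)\<close> in auto)
  next
    case False
    then have lt: "2 * card P < 2 ^ d" using neq by simp
    have eqs: "Pow S - P = Hb False" unfolding P_def Hb_def by auto
    have "card (Pow S - P) = 2 ^ d - card P" using PS fS unfolding d_def by (simp add: card_Diff_subset fP card_Pow)
    then have "card (Pow S - P) > 2 ^ (card S - 1)" using lt pow unfolding d_def by simp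
    show ?thesis
    proof (rule that[of "Pow S - P"])
      fix T i assume a: "T \<in> Pow S - P" "i \<in> S" "flip T i \<in> Pow S - P"
      show "f (\<lambda>j. j \<in> T) \<noteq> f (\<lambda>j. j \<in> flip T i)"
        using Hb_edge[OF fS a(1)[unfolded eqs Hb_def] a(2) a(3)[unfolded eqs Hb_def]] .
    qed (use \<open>card (Pow S - P) > 2 ^ (card S - 1)\<close> in auto)
  qed
  have "sqrt (real d) \<le> spec_sens n f" using spec_lower[OF S(1) Sne H edge] unfolding d_def by blast
  then have "(sqrt (real d))\<^sup>2 \<le> (spec_sens n f)\<^sup>2" by (intro power_mono) auto
  then show ?thesis using S(3) unfolding d_def by simp
qed

end
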